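(* Fix $\sigma>0$ and $\alpha\in[\tfrac12,1]$. For $\mathsf{A}>0$ let $\mathsf{C}(\mathsf{A},\alpha\mathsf{A})=\sup I(X;Y)$, where $Y=X+Z$ with $Z\sim\mathcal{N}(0,\sigma^2)$ independent of $X$, and the supremum is over all distributions of $X$ with $X\ge0$ a.s., $\Pr[X>\mathsf{A}]=0$ and $\mathbb{E}[X]\le\alpha\mathsf{A}$. Then $$\lim_{\mathsf{A}\uparrow\infty}\left\{\mathsf{C}(\mathsf{A},\alpha\mathsf{A})-\log\frac{\mathsf{A}}{\sigma}\right\}=-\frac12\log(2\pi e)\qquad\text{and}\qquad\lim_{\mathsf{A}\downarrow0}\frac{\mathsf{C}(\mathsf{A},\alpha\mathsf{A})}{\mathsf{A}^2/\sigma^2}=\frac18.$$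
   Context: Logarithms are natural (capacity in nats). The channel is the free-space optical intensity channel with nonnegative input, peak-power constraint $\mathsf{A}$, average-power constraint $\alpha\mathsf{A}$, and additive Gaussian noise of variance $\sigma^2$. *)

theory Defs
  imports "HOL-Probability.Probability"
begin

definition gauss_noise :: "real \<Rightarrow> real measure" where
  "gauss_noise \<sigma> = density lborel (\<lambda>z. ennreal (normal_density 0 \<sigma> z))"

definition input_noise_space :: "real measure \<Rightarrow> real \<Rightarrow> (real \<times> real) measure" where
  "input_noise_space \<mu> \<sigma> = \<mu> \<Otimes>\<^sub>M gauss_noise \<sigma>"

definition channel_MI :: "real measure \<Rightarrow> real \<Rightarrow> real" where
  "channel_MI \<mu> \<sigma> =
     prob_space.mutual_information (input_noise_space \<mu> \<sigma>) (exp 1) borel borel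
       fst (\<lambda>(x, z). x + z)"

definition admissible_input :: "real \<Rightarrow> real \<Rightarrow> real measure \<Rightarrow> bool" where
  "admissible_input A \<alpha> \<mu> \<longleftrightarrow>
     sets \<mu> = sets borel \<and> prob_space \<mu> \<and>
     (AE x in \<mu>. 0 \<le> x) \<and> emeasure \<mu> {x. x > A} = 0 \<and>
     (\<integral>x. x \<partial>\<mu>) \<le> \<alpha> * A"

definition capacity :: "real \<Rightarrow> real \<Rightarrow> real \<Rightarrow> real" where
  "capacity \<sigma> \<alpha> A = Sup {channel_MI \<mu> \<sigma> | \<mu>. admissible_input A \<alpha> \<mu>}"

end

theory Submission
  imports Defs "HOL-Real_Asymp.Real_Asymp"
begin

abbreviation nd :: "real \<Rightarrow> real \<Rightarrow> real" where "nd \<sigma> z \<equiv> normal_density 0 \<sigma> z"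

lemma nd_pos: "\<sigma> > 0 \<Longrightarrow> nd \<sigma> z > 0" by (rule normal_density_pos)

lemma ln_nd: assumes "\<sigma> > 0"
  shows "ln (nd \<sigma> z) = - ln (2*pi*\<sigma>\<^sup>2)/2 - z\<^sup>2/(2*\<sigma>\<^sup>2)"
proof -
  have p: "2*pi*\<sigma>\<^sup>2 > 0" using assms by simp
  have "ln (nd \<sigma> z) = ln (1 / sqrt (2*pi*\<sigma>\<^sup>2)) + ln (exp (-(z - 0)\<^sup>2/(2*\<sigma>\<^sup>2)))"
    unfolding normal_density_def using p by (subst ln_mult) auto
  also have "ln (1 / sqrt (2*pi*\<sigma>\<^sup>2)) = - ln (2*pi*\<sigma>\<^sup>2)/2"
    using p by (simp add: ln_div ln_sqrt)
  finally show ?thesis by simp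
qed

lemma nd_mono: assumes "\<bar>w\<bar> \<le> \<bar>z\<bar>" shows "nd \<sigma> z \<le> nd \<sigma> w"
proof -
  have "w\<^sup>2 \<le> z\<^sup>2" using assms by (metis abs_le_square_iff)
  then have "-(z - 0)\<^sup>2/(2*\<sigma>\<^sup>2) \<le> -(w - 0)\<^sup>2/(2*\<sigma>\<^sup>2)"
    by (simp add: divide_right_mono)
  then show ?thesis unfolding normal_density_def
    by (intro mult_left_mono) auto
qed

lemma nd_le0: "nd \<sigma> z \<le> nd \<sigma> 0" by (rule nd_mono) simp

lemma nd_0: "nd \<sigma> 0 = 1 / sqrt (2*pi*\<sigma>\<^sup>2)" unfolding normal_density_def by simp

lemma nd_sym: "nd \<sigma> (y - x) = normal_density y \<sigma> x"
  unfolding normal_density_def by (simp add: power2_commute)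

lemma integrable_nd_pow: "\<sigma> > 0 \<Longrightarrow> integrable lborel (\<lambda>z. nd \<sigma> z * z ^ k)"
  using integrable_normal_moment[where \<mu>=0 and \<sigma>=\<sigma> and k=k] by simp

lemma integral_nd_sq: "\<sigma> > 0 \<Longrightarrow> (\<integral>z. nd \<sigma> z * z\<^sup>2 \<partial>lborel) = \<sigma>\<^sup>2"
  using integral_normal_moment_even[where \<mu>=0 and \<sigma>=\<sigma> and k=1] by (simp add: power2_eq_square)

lemma integral_nd_4: "\<sigma> > 0 \<Longrightarrow> (\<integral>z. nd \<sigma> z * z ^ 4 \<partial>lborel) = 3 * \<sigma>^4"
  using integral_normal_moment_even[where \<mu>=0 and \<sigma>=\<sigma> and k=2] by (simp add: fact_numeral power2_eq_square field_simps power4_eq_xxxx)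

lemma integral_nd_1: "\<sigma> > 0 \<Longrightarrow> (\<integral>z. nd \<sigma> z * z \<partial>lborel) = 0"
  using integral_normal_moment_odd[where \<mu>=0 and \<sigma>=\<sigma> and k=0] by simp

lemma nd_exp: assumes "\<sigma> > 0"
  shows "nd \<sigma> z * exp (c*z) = exp (c\<^sup>2*\<sigma>\<^sup>2/2) * normal_density (c*\<sigma>\<^sup>2) \<sigma> z"
proof -
  have "-(z - 0)\<^sup>2/(2*\<sigma>\<^sup>2) + c*z = c\<^sup>2*\<sigma>\<^sup>2/2 + (-(z - c*\<sigma>\<^sup>2)\<^sup>2/(2*\<sigma>\<^sup>2))"
    using assms by (simp add: field_simps power2_eq_square)
  then show ?thesis unfolding normal_density_def
    by (simp add: exp_add[symmetric] mult_ac)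
qed

lemma has_integral_nd_exp: assumes "\<sigma> > 0"
  shows "has_bochner_integral lborel (\<lambda>z. nd \<sigma> z * exp (c*z)) (exp (c\<^sup>2*\<sigma>\<^sup>2/2))"
proof -
  have "has_bochner_integral lborel (\<lambda>z. exp (c\<^sup>2*\<sigma>\<^sup>2/2) * normal_density (c*\<sigma>\<^sup>2) \<sigma> z) (exp (c\<^sup>2*\<sigma>\<^sup>2/2) * 1)"
    by (intro has_bochner_integral_mult_right) (auto simp: has_bochner_integral_iff assms)
  then show ?thesis using nd_exp[OF assms] by simp
qed

definition pY :: "real measure \<Rightarrow> real \<Rightarrow> real \<Rightarrow> real" where
  "pY \<mu> \<sigma> y = (\<integral>x. nd \<sigma> (y - x) \<partial>\<mu>)"

lemma prob_G: "\<sigma> > 0 \<Longrightarrow> prob_space (gauss_noise \<sigma>)"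
  unfolding gauss_noise_def by (rule prob_space_normal_density)

lemma sets_G[measurable_cong]: "sets (gauss_noise \<sigma>) = sets borel"
  unfolding gauss_noise_def by simp

locale chan =
  fixes \<mu> :: "real measure" and \<sigma> A :: real
  assumes sig: "\<sigma> > 0" and sets_mu[measurable_cong]: "sets \<mu> = sets borel"
    and prob_mu: "prob_space \<mu>" and supp: "AE x in \<mu>. 0 \<le> x \<and> x \<le> A"
begin

abbreviation "G \<equiv> gauss_noise \<sigma>"
abbreviation "M \<equiv> \<mu> \<Otimes>\<^sub>M G"

sublocale PM: pair_prob_space \<mu> G
  unfolding pair_prob_space_def pair_sigma_finite_def using prob_mu prob_G[OF sig]
  by (auto intro: prob_space_imp_sigma_finite)

sublocale PL: pair_sigma_finite \<mu> lborel
  unfolding pair_sigma_finite_def using prob_mu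
  by (auto intro: prob_space_imp_sigma_finite lborel.sigma_finite_measure_axioms)

lemma pY_meas[measurable]: "pY \<mu> \<sigma> \<in> borel_measurable borel"
proof -
  have "(\<lambda>y. \<integral>x. nd \<sigma> (y - x) \<partial>\<mu>) \<in> borel_measurable borel"
    by (rule PM.M1.borel_measurable_lebesgue_integral) measurable
  then show ?thesis unfolding pY_def[abs_def] .
qed

lemma pY_int: "integrable \<mu> (\<lambda>x. nd \<sigma> (y - x))"
  by (rule PM.M1.integrable_const_bound[where B="nd \<sigma> 0"]) (auto intro: nd_le0)

lemma pY_upper: "pY \<mu> \<sigma> y \<le> nd \<sigma> 0"
proof -
  have "pY \<mu> \<sigma> y \<le> (\<integral>x. nd \<sigma> 0 \<partial>\<mu>)"
    unfolding pY_def by (intro integral_mono pY_int) (auto intro: nd_le0)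
  then show ?thesis by (simp add: PM.M1.prob_space)
qed

lemma pY_lower: "nd \<sigma> (\<bar>y\<bar> + A) \<le> pY \<mu> \<sigma> y"
proof -
  have "(\<integral>x. nd \<sigma> (\<bar>y\<bar> + A) \<partial>\<mu>) \<le> pY \<mu> \<sigma> y"
    unfolding pY_def
  proof (intro integral_mono_AE pY_int)
    show "AE x in \<mu>. nd \<sigma> (\<bar>y\<bar> + A) \<le> nd \<sigma> (y - x)"
      using supp by eventually_elim (intro nd_mono, auto)
  qed simp
  then show ?thesis by (simp add: PM.M1.prob_space)
qed

lemma pY_pos: "pY \<mu> \<sigma> y > 0"
  using pY_lower[of y] nd_pos[OF sig, of "\<bar>y\<bar> + A"] by linarith

lemma shear:
  fixes F :: "real \<times> real \<Rightarrow> ennreal"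
  assumes F[measurable]: "F \<in> borel_measurable (borel \<Otimes>\<^sub>M borel)"
  shows "(\<integral>\<^sup>+w. F (fst w, fst w + snd w) \<partial>M) =
         (\<integral>\<^sup>+w. ennreal (nd \<sigma> (snd w - fst w)) * F w \<partial>(\<mu> \<Otimes>\<^sub>M lborel))"
proof -
  have "(\<integral>\<^sup>+w. F (fst w, fst w + snd w) \<partial>M) = (\<integral>\<^sup>+x. \<integral>\<^sup>+z. F (x, x + z) \<partial>G \<partial>\<mu>)"
    by (subst PM.M2.nn_integral_fst[symmetric]) (auto simp: split_beta')
  also have "\<dots> = (\<integral>\<^sup>+x. \<integral>\<^sup>+z. ennreal (nd \<sigma> z) * F (x, x + z) \<partial>lborel \<partial>\<mu>)"
    unfolding gauss_noise_def by (subst nn_integral_density) auto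
  also have "\<dots> = (\<integral>\<^sup>+x. \<integral>\<^sup>+y. ennreal (nd \<sigma> (y - x)) * F (x, y) \<partial>lborel \<partial>\<mu>)"
  proof (rule nn_integral_cong)
    fix x assume "x \<in> space \<mu>"
    show "(\<integral>\<^sup>+z. ennreal (nd \<sigma> z) * F (x, x + z) \<partial>lborel) = (\<integral>\<^sup>+y. ennreal (nd \<sigma> (y - x)) * F (x, y) \<partial>lborel)"
      using nn_integral_real_affine[where c=1 and t=x and f="\<lambda>y. ennreal (nd \<sigma> (y - x)) * F (x, y)"] by simp
  qed
  also have "\<dots> = (\<integral>\<^sup>+w. ennreal (nd \<sigma> (snd w - fst w)) * F w \<partial>(\<mu> \<Otimes>\<^sub>M lborel))"
    by (subst lborel.nn_integral_fst[symmetric]) (auto simp: split_beta')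
  finally show ?thesis .
qed

end

lemma log_e: "log (exp 1) x = ln x" by (simp add: log_def)

context chan begin

lemma sets_ML: "sets (\<mu> \<Otimes>\<^sub>M lborel) = sets (borel \<Otimes>\<^sub>M borel)"
  by (rule sets_pair_measure_cong) (auto simp: sets_mu)

lemma distr_Y: "distr M lborel (\<lambda>(x,z). x + z) = density lborel (pY \<mu> \<sigma>)"
proof (rule measure_eqI)
  fix B assume "B \<in> sets (distr M lborel (\<lambda>(x,z). x + z))"
  then have B[measurable]: "B \<in> sets borel" by simp
  have "emeasure (distr M lborel (\<lambda>(x,z). x + z)) B = (\<integral>\<^sup>+y. indicator B y \<partial>distr M lborel (\<lambda>(x,z). x + z))"
    by (simp add: nn_integral_indicator)
  also have "\<dots> = (\<integral>\<^sup>+w. indicator B (fst w + snd w) \<partial>M)"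
    by (subst nn_integral_distr) (auto simp: split_beta')
  also have "\<dots> = (\<integral>\<^sup>+w. ennreal (nd \<sigma> (snd w - fst w)) * indicator B (snd w) \<partial>(\<mu> \<Otimes>\<^sub>M lborel))"
    using shear[of "\<lambda>w. indicator B (snd w)"] by simp
  also have "\<dots> = (\<integral>\<^sup>+y. \<integral>\<^sup>+x. ennreal (nd \<sigma> (y - x)) * indicator B y \<partial>\<mu> \<partial>lborel)"
    by (subst PL.nn_integral_snd[symmetric]) (auto simp: split_beta')
  also have "\<dots> = (\<integral>\<^sup>+y. ennreal (pY \<mu> \<sigma> y) * indicator B y \<partial>lborel)"
  proof (rule nn_integral_cong)
    fix y :: real
    have "(\<integral>\<^sup>+x. ennreal (nd \<sigma> (y - x)) \<partial>\<mu>) = ennreal (pY \<mu> \<sigma> y)"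
      unfolding pY_def by (rule nn_integral_eq_integral[OF pY_int]) simp
    then show "(\<integral>\<^sup>+x. ennreal (nd \<sigma> (y - x)) * indicator B y \<partial>\<mu>) = ennreal (pY \<mu> \<sigma> y) * indicator B y"
      by (subst nn_integral_multc) auto
  qed
  also have "\<dots> = emeasure (density lborel (pY \<mu> \<sigma>)) B"
    by (subst emeasure_density) auto
  finally show "emeasure (distr M lborel (\<lambda>(x,z). x + z)) B = emeasure (density lborel (pY \<mu> \<sigma>)) B" .
qed simp

lemma distr_XY: "distr M (\<mu> \<Otimes>\<^sub>M lborel) (\<lambda>w. (fst w, fst w + snd w)) =
   density (\<mu> \<Otimes>\<^sub>M lborel) (\<lambda>w. ennreal (nd \<sigma> (snd w - fst w)))"
proof (rule measure_eqI)
  fix C assume "C \<in> sets (distr M (\<mu> \<Otimes>\<^sub>M lborel) (\<lambda>w. (fst w, fst w + snd w)))"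
  then have "C \<in> sets (\<mu> \<Otimes>\<^sub>M lborel)" by simp
  then have C[measurable]: "C \<in> sets (borel \<Otimes>\<^sub>M borel)" by (simp only: sets_ML)
  have "emeasure (distr M (\<mu> \<Otimes>\<^sub>M lborel) (\<lambda>w. (fst w, fst w + snd w))) C =
     (\<integral>\<^sup>+y. indicator C y \<partial>distr M (\<mu> \<Otimes>\<^sub>M lborel) (\<lambda>w. (fst w, fst w + snd w)))"
    by (simp add: nn_integral_indicator)
  also have "\<dots> = (\<integral>\<^sup>+w. indicator C (fst w, fst w + snd w) \<partial>M)"
    by (subst nn_integral_distr) auto
  also have "\<dots> = (\<integral>\<^sup>+w. ennreal (nd \<sigma> (snd w - fst w)) * indicator C w \<partial>(\<mu> \<Otimes>\<^sub>M lborel))"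
    using shear[of "indicator C"] by simp
  also have "\<dots> = emeasure (density (\<mu> \<Otimes>\<^sub>M lborel) (\<lambda>w. ennreal (nd \<sigma> (snd w - fst w)))) C"
    by (subst emeasure_density) auto
  finally show "emeasure (distr M (\<mu> \<Otimes>\<^sub>M lborel) (\<lambda>w. (fst w, fst w + snd w))) C =
      emeasure (density (\<mu> \<Otimes>\<^sub>M lborel) (\<lambda>w. ennreal (nd \<sigma> (snd w - fst w)))) C" .
qed simp

lemma distr_X: "distr M \<mu> fst = density \<mu> (\<lambda>_. ennreal 1)"
  using PM.M2.distr_pair_fst[of \<mu>] by (simp add: density_1)

end

context chan begin

lemma MI_formula: "channel_MI \<mu> \<sigma> = (\<integral>w. ln (nd \<sigma> (snd w)) - ln (pY \<mu> \<sigma> (fst w + snd w)) \<partial>M)"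
proof -
  interpret I: information_space M "exp 1"
    unfolding information_space_def information_space_axioms_def
    using PM.prob_space_axioms by simp
  have eq1: "channel_MI \<mu> \<sigma> = prob_space.mutual_information M (exp 1) \<mu> lborel fst (\<lambda>(x,z). x + z)"
    unfolding channel_MI_def input_noise_space_def PM.mutual_information_def
    by (intro arg_cong2[where f="KL_divergence (exp 1)"] arg_cong2[where f=pair_measure] distr_cong)
       (auto simp: sets_mu sets_ML)
  have sf1: "sigma_finite_measure \<mu>" by (rule PM.M1.sigma_finite_measure_axioms)
  have sf2: "sigma_finite_measure (lborel :: real measure)" by (rule lborel.sigma_finite_measure_axioms)
  have Px: "distributed M \<mu> fst (\<lambda>_. ennreal 1)"
    unfolding distributed_def using distr_X by auto
  have Py: "distributed M lborel (\<lambda>(x,z). x + z) (\<lambda>y. ennreal (pY \<mu> \<sigma> y))"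
    unfolding distributed_def using distr_Y by auto
  have Pxy: "distributed M (\<mu> \<Otimes>\<^sub>M lborel) (\<lambda>w. (fst w, (\<lambda>(x,z). x + z) w)) (\<lambda>w. ennreal (nd \<sigma> (snd w - fst w)))"
    unfolding distributed_def using distr_XY by (auto simp: split_beta')
  have "prob_space.mutual_information M (exp 1) \<mu> lborel fst (\<lambda>(x,z). x + z) =
     (\<integral>w. nd \<sigma> (snd w - fst w) * log (exp 1) (nd \<sigma> (snd w - fst w) / (1 * pY \<mu> \<sigma> (snd w))) \<partial>(\<mu> \<Otimes>\<^sub>M lborel))"
    by (rule I.mutual_information_distr[OF sf1 sf2 Px _ Py _ Pxy]) (auto simp: pY_pos less_imp_le)
  also have "\<dots> = (\<integral>w. ln (nd \<sigma> (snd w - fst w) / pY \<mu> \<sigma> (snd w)) \<partial>(density (\<mu> \<Otimes>\<^sub>M lborel) (\<lambda>w. ennreal (nd \<sigma> (snd w - fst w)))))"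
    by (subst integral_density) (auto simp: log_e)
  also have "\<dots> = (\<integral>w. ln (nd \<sigma> (snd w) / pY \<mu> \<sigma> (fst w + snd w)) \<partial>M)"
    unfolding distr_XY[symmetric] by (subst integral_distr) auto
  also have "\<dots> = (\<integral>w. ln (nd \<sigma> (snd w)) - ln (pY \<mu> \<sigma> (fst w + snd w)) \<partial>M)"
    apply (rule Bochner_Integration.integral_cong, simp)
    subgoal for w using nd_pos[OF sig, of "snd w"] pY_pos[of "fst w + snd w"] by (simp add: ln_div)
    done
  finally show ?thesis using eq1 by simp
qed

end

context chan begin

lemma distr_snd: "distr M G snd = G"
proof (intro measure_eqI)
  fix B assume B: "B \<in> sets (distr M G snd)"
  then have B': "B \<in> sets G" by simp
  from B have "emeasure (distr M G snd) B = emeasure M (space \<mu> \<times> B)"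
    by (auto simp add: emeasure_distr space_pair_measure dest: sets.sets_into_space intro!: arg_cong2[where f=emeasure])
  with B' show "emeasure (distr M G snd) B = emeasure G B"
    by (simp add: PM.M2.emeasure_pair_measure_Times PM.M1.emeasure_space_1)
qed simp

lemma AE_M: "AE w in M. 0 \<le> fst w \<and> fst w \<le> A"
proof -
  have "AE x in distr M \<mu> fst. 0 \<le> x \<and> x \<le> A" using supp unfolding PM.M2.distr_pair_fst[of \<mu>] by simp
  then show ?thesis by (subst (asm) AE_distr_iff) auto
qed

lemma integrable_M_snd:
  assumes [measurable]: "g \<in> borel_measurable borel" and i: "integrable lborel (\<lambda>z. nd \<sigma> z * g z)"
  shows "integrable M (\<lambda>w. g (snd w))"
proof -
  have "integrable G g" unfolding gauss_noise_def
    by (subst integrable_density) (use i in auto)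
  then have "integrable (distr M G snd) g" by (simp add: distr_snd)
  then show ?thesis by (subst (asm) integrable_distr_eq) auto
qed

lemma integral_M_snd:
  assumes [measurable]: "g \<in> borel_measurable borel"
  shows "(\<integral>w. g (snd w) \<partial>M) = (\<integral>z. nd \<sigma> z * g z \<partial>lborel)"
proof -
  have "(\<integral>w. g (snd w) \<partial>M) = (\<integral>z. g z \<partial>distr M G snd)"
    by (subst integral_distr) auto
  also have "\<dots> = (\<integral>z. nd \<sigma> z * g z \<partial>lborel)"
    unfolding distr_snd unfolding gauss_noise_def by (subst integral_density) auto
  finally show ?thesis .
qed

lemma integrable_M_pow: "integrable M (\<lambda>w. (snd w) ^ k)"
  by (rule integrable_M_snd) (auto intro: integrable_nd_pow[OF sig])

lemma integral_M_sq: "(\<integral>w. (snd w)\<^sup>2 \<partial>M) = \<sigma>\<^sup>2"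
  by (subst integral_M_snd) (auto simp: integral_nd_sq[OF sig])

lemma integral_M_4: "(\<integral>w. (snd w) ^ 4 \<partial>M) = 3 * \<sigma> ^ 4"
  by (subst integral_M_snd) (auto simp: integral_nd_4[OF sig])

lemma integral_M_1: "(\<integral>w. snd w \<partial>M) = 0"
  using integral_M_snd[of "\<lambda>z. z"] by (simp add: integral_nd_1[OF sig])

definition "Lc = ln (2*pi*\<sigma>\<^sup>2)/2"

lemma ln_nd': "ln (nd \<sigma> z) = - Lc - z\<^sup>2/(2*\<sigma>\<^sup>2)"
  unfolding Lc_def using ln_nd[OF sig] by simp

lemma integrable_lnnd: "integrable M (\<lambda>w. ln (nd \<sigma> (snd w)))"
proof -
  have "integrable M (\<lambda>w. - Lc - (snd w)^2/(2*\<sigma>\<^sup>2))"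
    using integrable_M_pow[of 2] by auto
  then show ?thesis by (simp add: ln_nd')
qed

lemma integral_lnnd: "(\<integral>w. ln (nd \<sigma> (snd w)) \<partial>M) = - Lc - 1/2"
proof -
  have "(\<integral>w. ln (nd \<sigma> (snd w)) \<partial>M) = (\<integral>w. - Lc - (snd w)^2/(2*\<sigma>\<^sup>2) \<partial>M)"
    by (simp add: ln_nd')
  also have "\<dots> = - Lc - (\<integral>w. (snd w)^2 \<partial>M)/(2*\<sigma>\<^sup>2)"
    using integrable_M_pow[of 2] by (simp add: PM.prob_space)
  also have "\<dots> = - Lc - 1/2" using sig by (simp add: integral_M_sq)
  finally show ?thesis .
qed

lemma lnpY_bounds: assumes "0 \<le> x" "x \<le> A"
  shows "ln (pY \<mu> \<sigma> (x + z)) \<le> - Lc" "- Lc - (8*A\<^sup>2 + 2*z\<^sup>2)/(2*\<sigma>\<^sup>2) \<le> ln (pY \<mu> \<sigma> (x + z))"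
proof -
  have "ln (pY \<mu> \<sigma> (x + z)) \<le> ln (nd \<sigma> 0)"
    using pY_upper pY_pos nd_pos[OF sig] by (subst ln_le_cancel_iff) auto
  then show "ln (pY \<mu> \<sigma> (x + z)) \<le> - Lc" by (simp add: ln_nd')
  have "ln (nd \<sigma> (\<bar>x + z\<bar> + A)) \<le> ln (pY \<mu> \<sigma> (x + z))"
    using pY_lower pY_pos nd_pos[OF sig] by (subst ln_le_cancel_iff) auto
  moreover have "(\<bar>x + z\<bar> + A)\<^sup>2 \<le> 8*A\<^sup>2 + 2*z\<^sup>2"
  proof -
    have "\<bar>x + z\<bar> + A \<le> 2*A + \<bar>z\<bar>" using assms by auto
    then have "(\<bar>x + z\<bar> + A)\<^sup>2 \<le> (2*A + \<bar>z\<bar>)\<^sup>2" using assms by (intro power_mono) auto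
    also have "\<dots> \<le> 8*A\<^sup>2 + 2*z\<^sup>2"
    proof -
      have e1: "(2*A + \<bar>z\<bar>)\<^sup>2 = 4*A\<^sup>2 + 4*A*\<bar>z\<bar> + \<bar>z\<bar>\<^sup>2" by (simp add: power2_eq_square algebra_simps)
      have e2: "(2*A - \<bar>z\<bar>)\<^sup>2 = 4*A\<^sup>2 - 4*A*\<bar>z\<bar> + \<bar>z\<bar>\<^sup>2" by (simp add: power2_eq_square algebra_simps)
      have "0 \<le> (2*A - \<bar>z\<bar>)\<^sup>2" by simp
      then show ?thesis using e1 e2 by simp
    qed
    finally show ?thesis .
  qed
  then have "(\<bar>x + z\<bar> + A)\<^sup>2/(2*\<sigma>\<^sup>2) \<le> (8*A\<^sup>2 + 2*z\<^sup>2)/(2*\<sigma>\<^sup>2)"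
    using sig by (intro divide_right_mono) auto
  ultimately show "- Lc - (8*A\<^sup>2 + 2*z\<^sup>2)/(2*\<sigma>\<^sup>2) \<le> ln (pY \<mu> \<sigma> (x + z))"
    by (simp add: ln_nd')
qed

lemma integrable_lnpY: "integrable M (\<lambda>w. ln (pY \<mu> \<sigma> (fst w + snd w)))"
proof (rule Bochner_Integration.integrable_bound)
  show "integrable M (\<lambda>w. \<bar>Lc\<bar> + (8*A\<^sup>2 + 2*(snd w)\<^sup>2)/(2*\<sigma>\<^sup>2))"
    using integrable_M_pow[of 2] by auto
  show "AE w in M. norm (ln (pY \<mu> \<sigma> (fst w + snd w))) \<le> norm (\<bar>Lc\<bar> + (8*A\<^sup>2 + 2*(snd w)\<^sup>2)/(2*\<sigma>\<^sup>2))"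
    using AE_M
  proof eventually_elim
    case (elim w)
    have "0 \<le> (8*A\<^sup>2 + 2*(snd w)\<^sup>2)/(2*\<sigma>\<^sup>2)" by auto
    with lnpY_bounds[of "fst w" "snd w"] elim show ?case by auto
  qed
qed measurable

lemma integrable_H: "integrable M (\<lambda>w. ln (nd \<sigma> (snd w)) - ln (pY \<mu> \<sigma> (fst w + snd w)))"
  using integrable_lnnd integrable_lnpY by auto

lemma MI_split: "channel_MI \<mu> \<sigma> = - Lc - 1/2 - (\<integral>w. ln (pY \<mu> \<sigma> (fst w + snd w)) \<partial>M)"
  unfolding MI_formula using integrable_lnnd integrable_lnpY
  by (subst Bochner_Integration.integral_diff) (auto simp: integral_lnnd)

end

context chan begin

lemma gibbs:
  fixes q :: "real \<Rightarrow> real"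
  assumes qm[measurable]: "q \<in> borel_measurable borel" and qpos: "\<And>y. q y > 0"
    and qi: "integrable lborel q" and q1: "(\<integral>y. q y \<partial>lborel) \<le> 1"
    and lqi: "integrable M (\<lambda>w. ln (q (fst w + snd w)))"
  shows "(\<integral>w. ln (q (fst w + snd w)) \<partial>M) \<le> (\<integral>w. ln (pY \<mu> \<sigma> (fst w + snd w)) \<partial>M)"
proof -
  have eqf: "(\<lambda>y. pY \<mu> \<sigma> y *\<^sub>R (q y / pY \<mu> \<sigma> y)) = q"
    using pY_pos by (auto simp: fun_eq_iff) (metis less_irrefl)
  have "integrable (density lborel (pY \<mu> \<sigma>)) (\<lambda>y. q y / pY \<mu> \<sigma> y)"
  proof (subst integrable_density)
    show "integrable lborel (\<lambda>y. pY \<mu> \<sigma> y *\<^sub>R (q y / pY \<mu> \<sigma> y))" unfolding eqf by (rule qi)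
  qed (auto simp: less_imp_le pY_pos)
  then have "integrable (distr M lborel (\<lambda>(x,z). x + z)) (\<lambda>y. q y / pY \<mu> \<sigma> y)"
    by (simp add: distr_Y)
  then have ir: "integrable M (\<lambda>w. q (fst w + snd w) / pY \<mu> \<sigma> (fst w + snd w))"
    by (subst (asm) integrable_distr_eq) (auto simp: split_beta')
  have "(\<integral>w. q (fst w + snd w) / pY \<mu> \<sigma> (fst w + snd w) \<partial>M) = (\<integral>y. q y / pY \<mu> \<sigma> y \<partial>distr M lborel (\<lambda>(x,z). x + z))"
    by (subst integral_distr) (auto simp: split_beta')
  also have "\<dots> = (\<integral>y. q y \<partial>lborel)"
    unfolding distr_Y by (subst integral_density) (auto simp: less_imp_le pY_pos simp del: real_scaleR_def, simp only: eqf)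
  finally have ieq: "(\<integral>w. q (fst w + snd w) / pY \<mu> \<sigma> (fst w + snd w) \<partial>M) = (\<integral>y. q y \<partial>lborel)" .
  have "(\<integral>w. ln (q (fst w + snd w)) \<partial>M) - (\<integral>w. ln (pY \<mu> \<sigma> (fst w + snd w)) \<partial>M)
      = (\<integral>w. ln (q (fst w + snd w)) - ln (pY \<mu> \<sigma> (fst w + snd w)) \<partial>M)"
    using lqi integrable_lnpY by simp
  also have "\<dots> \<le> (\<integral>w. q (fst w + snd w) / pY \<mu> \<sigma> (fst w + snd w) - 1 \<partial>M)"
  proof (rule integral_mono)
    show "integrable M (\<lambda>w. ln (q (fst w + snd w)) - ln (pY \<mu> \<sigma> (fst w + snd w)))"
      using lqi integrable_lnpY by simp
    show "integrable M (\<lambda>w. q (fst w + snd w) / pY \<mu> \<sigma> (fst w + snd w) - 1)"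
      using ir by simp
    fix w
    have "ln (q (fst w + snd w)) - ln (pY \<mu> \<sigma> (fst w + snd w)) = ln (q (fst w + snd w) / pY \<mu> \<sigma> (fst w + snd w))"
      using qpos[of "fst w + snd w"] pY_pos[of "fst w + snd w"] by (simp add: ln_div)
    also have "\<dots> \<le> q (fst w + snd w) / pY \<mu> \<sigma> (fst w + snd w) - 1"
      using qpos pY_pos by (intro ln_le_minus_one) simp
    finally show "ln (q (fst w + snd w)) - ln (pY \<mu> \<sigma> (fst w + snd w)) \<le> q (fst w + snd w) / pY \<mu> \<sigma> (fst w + snd w) - 1" .
  qed
  also have "\<dots> = (\<integral>y. q y \<partial>lborel) - 1"
    using ir by (simp add: ieq PM.prob_space)
  finally show ?thesis using q1 by simp
qed

end

lemma ln_normal: assumes "sv > 0"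
  shows "ln (normal_density m sv y) = - ln (2*pi* sv^2)/2 - (y - m)\<^sup>2/(2* sv^2)"
proof -
  have p: "2*pi* sv^2 > 0" using assms by simp
  have "ln (normal_density m sv y) = ln (1 / sqrt (2*pi* sv^2)) + ln (exp (-(y - m)\<^sup>2/(2* sv^2)))"
    unfolding normal_density_def using p by (subst ln_mult) auto
  also have "ln (1 / sqrt (2*pi* sv^2)) = - ln (2*pi* sv^2)/2"
    using p by (simp add: ln_div ln_sqrt)
  finally show ?thesis by simp
qed

lemma abs_le_sq1: "\<bar>z::real\<bar> \<le> z^2 + 1"
proof (cases "\<bar>z\<bar> \<le> 1")
  case True then show ?thesis by (simp add: add_increasing)
next
  case False
  then have "\<bar>z\<bar> * 1 \<le> \<bar>z\<bar> * \<bar>z\<bar>" by (intro mult_left_mono) auto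
  then show ?thesis by (simp add: power2_eq_square)
qed

context chan begin

lemma integrable_M_fst_snd:
  assumes [measurable]: "f \<in> borel_measurable borel" and bnd: "\<And>x. 0 \<le> x \<Longrightarrow> x \<le> A \<Longrightarrow> \<bar>f x\<bar> \<le> B"
  shows "integrable M (\<lambda>w. f (fst w) * snd w)"
proof (rule Bochner_Integration.integrable_bound)
  show "integrable M (\<lambda>w. B * (snd w)^2 + B)"
    using integrable_M_pow[of 2] by auto
  show "AE w in M. norm (f (fst w) * snd w) \<le> norm (B * (snd w)^2 + B)"
    using AE_M
  proof eventually_elim
    case (elim w)
    have fb: "\<bar>f (fst w)\<bar> \<le> B" using bnd elim by auto
    have B0: "0 \<le> B" using fb by linarith
    have "\<bar>snd w\<bar> \<le> (snd w)^2 + 1" by (rule abs_le_sq1)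
    then have "\<bar>f (fst w)\<bar> * \<bar>snd w\<bar> \<le> B * ((snd w)^2 + 1)"
      using fb B0 by (intro mult_mono) auto
    then show ?case using B0 by (simp add: abs_mult algebra_simps)
  qed
qed measurable

lemma integral_M_fst_snd:
  assumes [measurable]: "f \<in> borel_measurable borel" and bnd: "\<And>x. 0 \<le> x \<Longrightarrow> x \<le> A \<Longrightarrow> \<bar>f x\<bar> \<le> B"
  shows "(\<integral>w. f (fst w) * snd w \<partial>M) = 0"
proof -
  have "(\<integral>w. f (fst w) * snd w \<partial>M) = (\<integral>x. \<integral>z. f x * z \<partial>G \<partial>\<mu>)"
    using PM.integral_fst'[OF integrable_M_fst_snd[OF assms]] by simp
  also have "\<dots> = (\<integral>x. f x * (\<integral>z. z \<partial>G) \<partial>\<mu>)" by simp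
  also have "(\<integral>z. z \<partial>G) = 0"
    using integral_M_1 integral_M_snd[of "\<lambda>z. z"] unfolding gauss_noise_def
    by (subst integral_density) auto
  finally show ?thesis by simp
qed

lemma upper_gauss: assumes A0: "0 \<le> A"
  shows "channel_MI \<mu> \<sigma> \<le> ln (1 + A\<^sup>2/(4*\<sigma>\<^sup>2)) / 2"
proof -
  define sv where "sv = sqrt (\<sigma>\<^sup>2 + A\<^sup>2/4)"
  have s0: "sv > 0" unfolding sv_def using sig by (auto intro: add_pos_nonneg)
  have s2: "sv^2 = \<sigma>\<^sup>2 + A\<^sup>2/4" unfolding sv_def by (simp add: add_nonneg_nonneg)
  define q where "q y = normal_density (A/2) sv y" for y
  have lnq: "ln (q y) = - ln (2*pi* sv^2)/2 - (y - A/2)\<^sup>2/(2* sv^2)" for y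
    unfolding q_def by (rule ln_normal[OF s0])
  have expand: "(fst w + snd w - A/2)\<^sup>2 = (fst w - A/2)\<^sup>2 + 2 * ((fst w - A/2) * snd w) + (snd w)\<^sup>2" for w :: "real \<times> real"
    by (simp add: power2_eq_square algebra_simps)
  have i1: "integrable M (\<lambda>w. (fst w - A/2)\<^sup>2)"
  proof (rule PM.integrable_const_bound[where B="A\<^sup>2/4"])
    show "AE w in M. norm ((fst w - A/2)\<^sup>2) \<le> A\<^sup>2/4"
      using AE_M
    proof eventually_elim
      case (elim w)
      then have "\<bar>fst w - A/2\<bar> \<le> A/2" unfolding abs_le_iff by auto
      then have "\<bar>fst w - A/2\<bar>\<^sup>2 \<le> (A/2)\<^sup>2" by (intro power_mono) auto
      then show ?case by (simp add: power2_eq_square)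
    qed
  qed measurable
  have b1: "(\<integral>w. (fst w - A/2)\<^sup>2 \<partial>M) \<le> A\<^sup>2/4"
  proof -
    have "(\<integral>w. (fst w - A/2)\<^sup>2 \<partial>M) \<le> (\<integral>w. A\<^sup>2/4 \<partial>M)"
    proof (rule integral_mono_AE[OF i1])
      show "AE w in M. (fst w - A/2)\<^sup>2 \<le> A\<^sup>2/4"
        using AE_M
      proof eventually_elim
        case (elim w)
        then have "\<bar>fst w - A/2\<bar> \<le> A/2" unfolding abs_le_iff by auto
        then have "\<bar>fst w - A/2\<bar>\<^sup>2 \<le> (A/2)\<^sup>2" by (intro power_mono) auto
        then show ?case by (simp add: power2_eq_square)
      qed
    qed simp
    then show ?thesis by (simp add: PM.prob_space)
  qed
  have i2: "integrable M (\<lambda>w. (fst w - A/2) * snd w)"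
    by (rule integrable_M_fst_snd[where B="A"]) auto
  have z2: "(\<integral>w. (fst w - A/2) * snd w \<partial>M) = 0"
    by (rule integral_M_fst_snd[where B="A"]) auto
  have i3: "integrable M (\<lambda>w. (snd w)\<^sup>2)" using integrable_M_pow[of 2] by simp
  have isq: "integrable M (\<lambda>w. (fst w + snd w - A/2)\<^sup>2)"
    unfolding expand using i1 i2 i3 by auto
  have esq: "(\<integral>w. (fst w + snd w - A/2)\<^sup>2 \<partial>M) \<le> A\<^sup>2/4 + \<sigma>\<^sup>2"
    unfolding expand using i1 i2 i3 b1 z2 integral_M_sq by simp
  have ilq: "integrable M (\<lambda>w. ln (q (fst w + snd w)))"
    unfolding lnq using isq by auto
  have ilq_val: "(\<integral>w. ln (q (fst w + snd w)) \<partial>M) = - ln (2*pi* sv^2)/2 - (\<integral>w. (fst w + snd w - A/2)\<^sup>2 \<partial>M)/(2* sv^2)"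
    unfolding lnq using isq by (simp add: PM.prob_space)
  have g: "(\<integral>w. ln (q (fst w + snd w)) \<partial>M) \<le> (\<integral>w. ln (pY \<mu> \<sigma> (fst w + snd w)) \<partial>M)"
    by (rule gibbs[OF _ _ _ _ ilq]) (auto simp: q_def normal_density_pos s0)
  have "(\<integral>w. (fst w + snd w - A/2)\<^sup>2 \<partial>M)/(2* sv^2) \<le> 1/2"
  proof -
    have "(\<integral>w. (fst w + snd w - A/2)\<^sup>2 \<partial>M) \<le> sv^2" using esq s2 by simp
    then have "(\<integral>w. (fst w + snd w - A/2)\<^sup>2 \<partial>M)/(2* sv^2) \<le> sv^2/(2* sv^2)"
      by (intro divide_right_mono) auto
    also have "sv^2/(2* sv^2) = 1/2" using s0 by simp
    finally show ?thesis .
  qed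
  then have "channel_MI \<mu> \<sigma> \<le> - Lc - 1/2 + ln (2*pi* sv^2)/2 + 1/2"
    unfolding MI_split using g ilq_val by linarith
  also have "\<dots> = ln (sv^2/\<sigma>\<^sup>2) / 2"
    unfolding Lc_def using sig s0 by (simp add: ln_div ln_mult field_simps)
  also have "sv^2/\<sigma>\<^sup>2 = 1 + A\<^sup>2/(4*\<sigma>\<^sup>2)" using s2 sig by (simp add: field_simps)
  finally show ?thesis .
qed

end

lemma sq_sum_le: "(a + b)\<^sup>2 \<le> 2*a\<^sup>2 + 2*(b::real)\<^sup>2"
proof -
  have "0 \<le> (a - b)\<^sup>2" by simp
  then show ?thesis by (simp add: power2_eq_square algebra_simps)
qed

context chan begin

lemma upper_large:
  assumes A1: "1 \<le> A" and e0: "0 < \<eta>" and e1: "\<eta> < 1" and s0: "0 < sv"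
  shows "channel_MI \<mu> \<sigma> \<le> - Lc - 1/2 + ln ((A + 2 * sv)/(1 - \<eta>)) +
            ((- ln \<eta> + ln (2*pi*A\<^sup>2)/2 + 1/4) * \<sigma>\<^sup>2 + 3 * \<sigma>^4) / sv^2"
proof -
  define c1 where "c1 = (1 - \<eta>)/(A + 2 * sv)"
  define K where "K = - ln \<eta> + ln (2*pi*A\<^sup>2)/2 + 1/4"
  define L1 where "L1 = ln ((A + 2 * sv)/(1 - \<eta>))"
  define q where "q y = c1 * indicator {- sv..A + sv} y + \<eta> * normal_density (A/2) A y" for y
  have A0: "0 < A" using A1 by simp
  have c1pos: "0 < c1" unfolding c1_def using e1 A0 s0 by simp
  have c1le: "c1 \<le> 1" unfolding c1_def using e0 e1 A1 s0 by (simp add: divide_le_eq)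
  have L1c: "L1 = - ln c1" unfolding L1_def c1_def using e1 A0 s0 by (simp add: ln_div)
  have L1pos: "0 \<le> L1" using L1c c1pos c1le by simp
  have Kpos: "0 \<le> K"
  proof -
    have "- ln \<eta> \<ge> 0" using e0 e1 by simp
    moreover have "ln (2*pi*A\<^sup>2) \<ge> 0"
    proof -
      have "1 \<le> A\<^sup>2" using A1 by (simp add: one_le_power)
      moreover have "1 \<le> 2*pi" using pi_gt3 by simp
      ultimately have "1 \<le> 2*pi*A\<^sup>2" using mult_mono[of 1 "2*pi" 1 "A\<^sup>2"] by simp
      then show ?thesis by simp
    qed
    ultimately show ?thesis unfolding K_def by simp
  qed
  have ndA_le: "normal_density (A/2) A y \<le> 1" for y
  proof -
    have "normal_density (A/2) A y \<le> 1 / sqrt (2*pi*A\<^sup>2)"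
      unfolding normal_density_def by (intro mult_left_le) auto
    also have "\<dots> \<le> 1"
    proof -
      have "1 \<le> A\<^sup>2" using A1 by (simp add: one_le_power)
      moreover have "1 \<le> 2*pi" using pi_gt3 by simp
      ultimately have "1 \<le> 2*pi*A\<^sup>2" using mult_mono[of 1 "2*pi" 1 "A\<^sup>2"] by simp
      then show ?thesis by simp
    qed
    finally show ?thesis .
  qed
  have qpos: "0 < q y" for y
    unfolding q_def using c1pos e0 normal_density_pos[of A "A/2" y] A0
    by (intro add_nonneg_pos) (auto)
  have qle1: "q y \<le> 1" for y
  proof -
    have "q y \<le> c1 * 1 + \<eta> * 1"
      unfolding q_def using c1pos e0 ndA_le[of y]
      by (intro add_mono mult_left_mono) (auto simp: indicator_def)
    also have "\<dots> \<le> (1 - \<eta>) + \<eta>"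
    proof -
      have "c1 \<le> (1 - \<eta>)/1" unfolding c1_def using A1 s0 e1 by (intro divide_left_mono) auto
      then show ?thesis by simp
    qed
    finally show ?thesis by simp
  qed
  have bndA: "- ln (q (x + z)) \<le> K + z\<^sup>2" if x: "0 \<le> x" "x \<le> A" for x z
  proof -
    have "\<eta> * normal_density (A/2) A (x + z) \<le> q (x + z)"
      unfolding q_def using c1pos by (auto simp: indicator_def)
    then have "ln (\<eta> * normal_density (A/2) A (x + z)) \<le> ln (q (x + z))"
      using e0 normal_density_pos[of A "A/2" "x+z"] A0 qpos[of "x+z"] by (subst ln_le_cancel_iff) auto
    moreover have "ln (\<eta> * normal_density (A/2) A (x + z)) = ln \<eta> - ln (2*pi*A\<^sup>2)/2 - (x + z - A/2)\<^sup>2/(2*A\<^sup>2)"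
      using e0 normal_density_pos[of A "A/2" "x+z"] A0 by (simp add: ln_mult ln_normal) (simp add: field_simps)
    moreover have "(x + z - A/2)\<^sup>2/(2*A\<^sup>2) \<le> 1/4 + z\<^sup>2"
    proof -
      have "(x + z - A/2)\<^sup>2 = ((x - A/2) + z)\<^sup>2" by (simp add: algebra_simps)
      also have "\<dots> \<le> 2*(x - A/2)\<^sup>2 + 2*z\<^sup>2" by (rule sq_sum_le)
      also have "(x - A/2)\<^sup>2 \<le> (A/2)\<^sup>2"
      proof -
        have "\<bar>x - A/2\<bar> \<le> A/2" using x unfolding abs_le_iff by auto
        then have "\<bar>x - A/2\<bar>\<^sup>2 \<le> (A/2)\<^sup>2" by (intro power_mono) auto
        then show ?thesis by simp
      qed
      finally have "(x + z - A/2)\<^sup>2 \<le> A\<^sup>2/2 + 2*z\<^sup>2" by (simp add: power2_eq_square)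
      then have "(x + z - A/2)\<^sup>2/(2*A\<^sup>2) \<le> (A\<^sup>2/2 + 2*z\<^sup>2)/(2*A\<^sup>2)"
        using A0 by (intro divide_right_mono) auto
      also have "\<dots> = 1/4 + z\<^sup>2/A\<^sup>2" using A0 by (simp add: field_simps power2_eq_square)
      also have "z\<^sup>2/A\<^sup>2 \<le> z\<^sup>2"
      proof -
        have "1 \<le> A\<^sup>2" using A1 by (simp add: one_le_power)
        then show ?thesis by (simp add: divide_le_eq mult_le_cancel_left1)
      qed
      finally show ?thesis by simp
    qed
    ultimately show ?thesis unfolding K_def by linarith
  qed
  have bndB: "- ln (q (x + z)) \<le> L1" if x: "0 \<le> x" "x \<le> A" and z: "\<bar>z\<bar> \<le> sv" for x z
  proof -
    have "c1 \<le> q (x + z)"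
      unfolding q_def using x z e0 by (auto simp: indicator_def abs_le_iff intro!: add_nonneg_nonneg)
    then have "ln c1 \<le> ln (q (x + z))" using c1pos by simp
    then show ?thesis using L1c by simp
  qed
  have bnd: "- ln (q (x + z)) \<le> L1 + (K * z\<^sup>2 + z^4)/sv^2" if x: "0 \<le> x" "x \<le> A" for x z
  proof (cases "\<bar>z\<bar> \<le> sv")
    case True
    have "0 \<le> (K * z\<^sup>2 + z^4)/sv^2" using Kpos by simp
    then show ?thesis using bndB[OF x True] by simp
  next
    case False
    then have "sv^2 \<le> z\<^sup>2" using s0 by (metis abs_le_square_iff abs_of_pos linorder_le_cases not_le power2_abs)
    then have "1 \<le> z\<^sup>2/sv^2" using s0 by simp
    then have "K + z\<^sup>2 \<le> (K + z\<^sup>2) * (z\<^sup>2/sv^2)"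
      using Kpos by (metis mult.right_neutral mult_left_mono add_nonneg_nonneg zero_le_power2)
    also have "\<dots> = (K * z\<^sup>2 + z^4)/sv^2" by (simp add: field_simps power2_eq_square power4_eq_xxxx)
    finally show ?thesis using bndA[OF x, of z] L1pos by linarith
  qed
  have ib: "integrable M (\<lambda>w. L1 + (K * (snd w)\<^sup>2 + (snd w)^4)/sv^2)"
    using integrable_M_pow[of 2] integrable_M_pow[of 4] by auto
  have lq_nonpos: "ln (q y) \<le> 0" for y using qpos[of y] qle1[of y] by simp
  have ilq: "integrable M (\<lambda>w. ln (q (fst w + snd w)))"
  proof (rule Bochner_Integration.integrable_bound[OF ib])
    show "AE w in M. norm (ln (q (fst w + snd w))) \<le> norm (L1 + (K * (snd w)\<^sup>2 + (snd w)^4)/sv^2)"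
      using AE_M
    proof eventually_elim
      case (elim w)
      have "0 \<le> L1 + (K * (snd w)\<^sup>2 + (snd w)^4)/sv^2" using L1pos Kpos by simp
      then show ?case using bnd[of "fst w" "snd w"] elim lq_nonpos[of "fst w + snd w"] by simp
    qed
  qed (simp add: q_def)
  have "- (\<integral>w. ln (q (fst w + snd w)) \<partial>M) = (\<integral>w. - ln (q (fst w + snd w)) \<partial>M)" by simp
  also have "\<dots> \<le> (\<integral>w. L1 + (K * (snd w)\<^sup>2 + (snd w)^4)/sv^2 \<partial>M)"
  proof (rule integral_mono_AE)
    show "AE w in M. - ln (q (fst w + snd w)) \<le> L1 + (K * (snd w)\<^sup>2 + (snd w)^4)/sv^2"
      using AE_M by eventually_elim (rule bnd, auto)
  qed (use ib ilq in auto)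
  also have "\<dots> = L1 + (K * \<sigma>\<^sup>2 + 3 * \<sigma>^4)/sv^2"
    using integrable_M_pow[of 2] integrable_M_pow[of 4]
    by (simp add: PM.prob_space integral_M_sq integral_M_4)
  finally have e: "- (\<integral>w. ln (q (fst w + snd w)) \<partial>M) \<le> L1 + (K * \<sigma>\<^sup>2 + 3 * \<sigma>^4)/sv^2" .
  have nA: "integrable lborel (normal_density (A/2) A)" using integrable_normal_density[of A "A/2"] A0 by simp
  have nA1: "(\<integral>y. normal_density (A/2) A y \<partial>lborel) = 1" using integral_normal_density[of A "A/2"] A0 by simp
  have qint: "integrable lborel q"
    unfolding q_def by (intro Bochner_Integration.integrable_add integrable_mult_right)
      (auto simp: integrable_indicator_iff emeasure_lborel_Icc_eq nA)
  have qi1: "(\<integral>y. q y \<partial>lborel) = 1"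
  proof -
    have "(\<integral>y. q y \<partial>lborel) = c1 * (A + 2 * sv) + \<eta>"
      unfolding q_def using s0 A0
      by (subst Bochner_Integration.integral_add) (auto simp: integrable_indicator_iff emeasure_lborel_Icc_eq nA nA1)
    then show ?thesis unfolding c1_def using A0 s0 by simp
  qed
  have g: "(\<integral>w. ln (q (fst w + snd w)) \<partial>M) \<le> (\<integral>w. ln (pY \<mu> \<sigma> (fst w + snd w)) \<partial>M)"
    by (rule gibbs[OF _ qpos qint _ ilq]) (use qi1 in \<open>auto simp: q_def\<close>)
  show ?thesis unfolding MI_split using g e unfolding L1_def K_def by linarith
qed

end

lemma ln_poly: assumes "u > (-1::real)" shows "ln (1 + u) \<le> u - u\<^sup>2/2 + u^3/3"
proof -
  define g where "g t = ln (1 + t) - t + t\<^sup>2/2 - t^3/3" for t :: real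
  have d: "DERIV g t :> (- (t^3))/(1 + t)" if "t > -1" for t
  proof -
    have "DERIV g t :> 1/(1+t) - 1 + t - t\<^sup>2"
      unfolding g_def using that
      by (auto intro!: derivative_eq_intros simp: power2_eq_square field_simps)
    moreover have "1/(1+t) - 1 + t - t\<^sup>2 = (- (t^3))/(1 + t)"
      using that by (simp add: field_simps power2_eq_square power3_eq_cube)
    ultimately show ?thesis by simp
  qed
  have "g u \<le> g 0"
  proof (cases "u \<ge> 0")
    case True
    show ?thesis
    proof (rule DERIV_nonpos_imp_nonincreasing[of 0 u g, OF True])
      fix x assume "0 \<le> x" "x \<le> u"
      then show "\<exists>y. DERIV g x :> y \<and> y \<le> 0"
        using d[of x] by (intro exI[of _ "(- (x^3))/(1 + x)"]) auto
    qed
  next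
    case False
    show ?thesis
    proof (rule DERIV_nonneg_imp_nondecreasing[of u 0 g])
      show "u \<le> 0" using False by simp
      fix x assume x: "u \<le> x" "x \<le> 0"
      then have "x > -1" using assms by simp
      moreover have "0 \<le> -(x^3)"
      proof -
        have "0 \<le> x*x" by simp
        then have "x*x*x \<le> 0" using x(2) mult_nonneg_nonpos by blast
        then show ?thesis by (simp add: power3_eq_cube)
      qed
      ultimately have "(- (x^3))/(1 + x) \<ge> 0" by (intro divide_nonneg_pos) auto
      then show "\<exists>y. DERIV g x :> y \<and> y \<ge> 0"
        using d[of x] \<open>x > -1\<close> by blast
    qed
  qed
  then show ?thesis unfolding g_def by simp
qed

lemma exp_moment:
  assumes "\<sigma> > 0"
  shows "has_bochner_integral lborel (\<lambda>z. nd \<sigma> z * exp (c*z - c\<^sup>2*\<sigma>\<^sup>2/2) ^ k) (exp (real k * (real k - 1) * c\<^sup>2*\<sigma>\<^sup>2/2))"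
proof -
  have eq: "nd \<sigma> z * exp (c*z - c\<^sup>2*\<sigma>\<^sup>2/2) ^ k = exp (- real k * c\<^sup>2*\<sigma>\<^sup>2/2) * (nd \<sigma> z * exp ((real k * c) * z))" for z
  proof -
    have "exp (c*z - c\<^sup>2*\<sigma>\<^sup>2/2) ^ k = exp (real k * (c*z - c\<^sup>2*\<sigma>\<^sup>2/2))"
      by (rule exp_of_nat_mult[symmetric])
    also have "\<dots> = exp (- real k * c\<^sup>2*\<sigma>\<^sup>2/2) * exp ((real k * c) * z)"
      by (simp add: exp_add[symmetric] algebra_simps)
    finally show ?thesis by simp
  qed
  have "has_bochner_integral lborel (\<lambda>z. exp (- real k * c\<^sup>2*\<sigma>\<^sup>2/2) * (nd \<sigma> z * exp ((real k * c) * z)))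
          (exp (- real k * c\<^sup>2*\<sigma>\<^sup>2/2) * exp ((real k * c)\<^sup>2*\<sigma>\<^sup>2/2))"
    by (intro has_bochner_integral_mult_right has_integral_nd_exp assms)
  moreover have "exp (- real k * c\<^sup>2*\<sigma>\<^sup>2/2) * exp ((real k * c)\<^sup>2*\<sigma>\<^sup>2/2) = exp (real k * (real k - 1) * c\<^sup>2*\<sigma>\<^sup>2/2)"
    by (simp add: exp_add[symmetric] power2_eq_square algebra_simps)
  ultimately show ?thesis unfolding eq by simp
qed

lemma bin_slice:
  assumes sig: "\<sigma> > 0"
  shows "exp (c\<^sup>2*\<sigma>\<^sup>2)/4 - exp (3*(c\<^sup>2*\<sigma>\<^sup>2))/24 - 5/24 \<le>
         (\<integral>z. nd \<sigma> z * (- ln ((1 + exp (c*z - c\<^sup>2*\<sigma>\<^sup>2/2))/2)) \<partial>lborel)"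
proof -
  define e where "e z = exp (c*z - c\<^sup>2*\<sigma>\<^sup>2/2)" for z
  have epos: "0 < e z" for z unfolding e_def by simp
  have hk: "has_bochner_integral lborel (\<lambda>z. nd \<sigma> z * e z ^ k) (exp (real k * (real k - 1) * c\<^sup>2*\<sigma>\<^sup>2/2))" for k
    unfolding e_def by (rule exp_moment[OF sig])
  have h0: "has_bochner_integral lborel (\<lambda>z. nd \<sigma> z) 1" using hk[of 0] by simp
  have h1: "has_bochner_integral lborel (\<lambda>z. nd \<sigma> z * e z) 1" using hk[of 1] by simp
  have h2: "has_bochner_integral lborel (\<lambda>z. nd \<sigma> z * e z ^ 2) (exp (c\<^sup>2*\<sigma>\<^sup>2))" using hk[of 2] by simp
  have h3: "has_bochner_integral lborel (\<lambda>z. nd \<sigma> z * e z ^ 3) (exp (3*(c\<^sup>2*\<sigma>\<^sup>2)))"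
    using hk[of 3] by (simp add: algebra_simps)
  define P where "P z = 2/3 * nd \<sigma> z - 7/8 * (nd \<sigma> z * e z) + 1/4 * (nd \<sigma> z * e z ^ 2) - 1/24 * (nd \<sigma> z * e z ^ 3)" for z
  have hP: "has_bochner_integral lborel P (2/3 * 1 - 7/8 * 1 + 1/4 * exp (c\<^sup>2*\<sigma>\<^sup>2) - 1/24 * exp (3*(c\<^sup>2*\<sigma>\<^sup>2)))"
    unfolding P_def[abs_def]
    by (intro has_bochner_integral_add has_bochner_integral_diff has_bochner_integral_mult_right h0 h1 h2 h3)
  have ptw: "P z \<le> nd \<sigma> z * (- ln ((1 + e z)/2))" for z
  proof -
    define u where "u = (e z - 1)/2"
    have u1: "u > -1" unfolding u_def using epos[of z] by simp
    have "ln ((1 + e z)/2) = ln (1 + u)" unfolding u_def by (simp add: field_simps)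
    also have "\<dots> \<le> u - u\<^sup>2/2 + u^3/3" by (rule ln_poly[OF u1])
    finally have "- (u - u\<^sup>2/2 + u^3/3) \<le> - ln ((1 + e z)/2)" by simp
    moreover have "- (u - u\<^sup>2/2 + u^3/3) = 2/3 - 7/8 * e z + 1/4 * e z ^ 2 - 1/24 * e z ^ 3"
      unfolding u_def by (simp add: field_simps power2_eq_square power3_eq_cube)
    ultimately have "2/3 - 7/8 * e z + 1/4 * e z ^ 2 - 1/24 * e z ^ 3 \<le> - ln ((1 + e z)/2)" by simp
    then have "nd \<sigma> z * (2/3 - 7/8 * e z + 1/4 * e z ^ 2 - 1/24 * e z ^ 3) \<le> nd \<sigma> z * (- ln ((1 + e z)/2))"
      by (intro mult_left_mono) auto
    then show ?thesis unfolding P_def by (simp add: algebra_simps)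
  qed
  have iln: "integrable lborel (\<lambda>z. nd \<sigma> z * (- ln ((1 + e z)/2)))"
  proof (rule Bochner_Integration.integrable_bound)
    show "integrable lborel (\<lambda>z. ln 2 * nd \<sigma> z + nd \<sigma> z * e z)"
      using h0 h1 by (intro Bochner_Integration.integrable_add integrable_mult_right) (auto simp: has_bochner_integral_iff)
    show "AE z in lborel. norm (nd \<sigma> z * (- ln ((1 + e z)/2))) \<le> norm (ln 2 * nd \<sigma> z + nd \<sigma> z * e z)"
    proof (rule AE_I2)
      fix z
      have a: "- ln 2 \<le> ln ((1 + e z)/2)"
      proof -
        have "ln (1/2) \<le> ln ((1 + e z)/2)" using epos[of z] by (subst ln_le_cancel_iff) auto
        then show ?thesis by (simp add: ln_div)
      qed
      have b: "ln ((1 + e z)/2) \<le> e z"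
      proof -
        have "ln ((1 + e z)/2) \<le> (1 + e z)/2 - 1" using epos[of z] by (intro ln_le_minus_one) (auto intro: add_pos_nonneg)
        then show ?thesis using epos[of z] by simp
      qed
      have "\<bar>ln ((1 + e z)/2)\<bar> \<le> ln 2 + e z" unfolding abs_le_iff using a b epos[of z] ln_ge_zero[of "2::real"] by linarith
      then have "nd \<sigma> z * \<bar>ln ((1 + e z)/2)\<bar> \<le> nd \<sigma> z * (ln 2 + e z)" by (intro mult_left_mono) auto
      moreover have "0 \<le> nd \<sigma> z * (ln 2 + e z)" using epos[of z] by (intro mult_nonneg_nonneg add_nonneg_nonneg) auto
      ultimately show "norm (nd \<sigma> z * (- ln ((1 + e z)/2))) \<le> norm (ln 2 * nd \<sigma> z + nd \<sigma> z * e z)"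
        by (simp add: abs_mult algebra_simps)
    qed
  qed (simp add: e_def)
  have "(\<integral>z. P z \<partial>lborel) \<le> (\<integral>z. nd \<sigma> z * (- ln ((1 + e z)/2)) \<partial>lborel)"
    using hP iln ptw by (intro integral_mono) (auto simp: has_bochner_integral_iff)
  moreover have "(\<integral>z. P z \<partial>lborel) = exp (c\<^sup>2*\<sigma>\<^sup>2)/4 - exp (3*(c\<^sup>2*\<sigma>\<^sup>2))/24 - 5/24"
    using hP by (simp add: has_bochner_integral_iff)
  ultimately show ?thesis unfolding e_def by simp
qed

lemma admissible_chan:
  assumes "admissible_input A \<alpha> \<mu>" "\<sigma> > 0"
  shows "chan \<mu> \<sigma> A"
proof -
  have s: "sets \<mu> = sets borel" and p: "prob_space \<mu>" and a0: "AE x in \<mu>. 0 \<le> x"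
    and e: "emeasure \<mu> {x. x > A} = 0"
    using assms(1) unfolding admissible_input_def by auto
  have "AE x in \<mu>. x \<le> A"
  proof (rule AE_I'[of "{x. x > A}"])
    show "{x. A < x} \<in> null_sets \<mu>" using e s by (intro null_setsI) auto
    show "{x \<in> space \<mu>. \<not> x \<le> A} \<subseteq> {x. A < x}" by auto
  qed
  with a0 have "AE x in \<mu>. 0 \<le> x \<and> x \<le> A" by eventually_elim auto
  then show ?thesis using s p assms(2) by (intro chan.intro)
qed

lemma nd_ratio: assumes "\<sigma> > 0"
  shows "nd \<sigma> (z + d) = nd \<sigma> z * exp ((- d/\<sigma>\<^sup>2) * z - (- d/\<sigma>\<^sup>2)\<^sup>2 * \<sigma>\<^sup>2/2)"
proof -
  have "- (z + d - 0)\<^sup>2/(2*\<sigma>\<^sup>2) = - (z - 0)\<^sup>2/(2*\<sigma>\<^sup>2) + ((- d/\<sigma>\<^sup>2) * z - (- d/\<sigma>\<^sup>2)\<^sup>2 * \<sigma>\<^sup>2/2)"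
    using assms by (simp add: field_simps power2_eq_square)
  then have "exp (- (z + d - 0)\<^sup>2/(2*\<sigma>\<^sup>2)) = exp (- (z - 0)\<^sup>2/(2*\<sigma>\<^sup>2)) * exp ((- d/\<sigma>\<^sup>2) * z - (- d/\<sigma>\<^sup>2)\<^sup>2 * \<sigma>\<^sup>2/2)"
    by (simp only: exp_add)
  then show ?thesis unfolding normal_density_def by simp
qed

lemma nd_ratio2: assumes "\<sigma> > 0" "c = - d/\<sigma>\<^sup>2"
  shows "nd \<sigma> (z + d) = nd \<sigma> z * exp (c*z - c\<^sup>2*\<sigma>\<^sup>2/2)"
  using nd_ratio[OF assms(1), of z d] unfolding assms(2)[symmetric] .

definition muB :: "real \<Rightarrow> real measure" where
  "muB A = distr (measure_pmf (bernoulli_pmf (1/2))) borel (\<lambda>b. if b then A else 0)"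

lemma muB_int: fixes f :: "real \<Rightarrow> real" assumes [measurable]: "f \<in> borel_measurable borel"
  shows "(\<integral>x. f x \<partial>muB A) = (f A + f 0)/2"
  unfolding muB_def by (subst integral_distr) auto

lemma muB_adm: assumes "0 < A" "1/2 \<le> \<alpha>" shows "admissible_input A \<alpha> (muB A)"
proof -
  have "prob_space (muB A)" unfolding muB_def by (rule prob_space.prob_space_distr) (auto intro: prob_space_measure_pmf)
  moreover have "AE x in muB A. 0 \<le> x" unfolding muB_def using assms by (subst AE_distr_iff) auto
  moreover have "emeasure (muB A) {x. x > A} = 0" unfolding muB_def
    using assms by (subst emeasure_distr) (auto simp: measure_pmf.emeasure_eq_measure)
  moreover have "(\<integral>x. x \<partial>muB A) \<le> \<alpha> * A"
  proof -
    have "(\<integral>x. x \<partial>muB A) = (A + 0)/2" by (rule muB_int) simp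
    moreover have "(1/2)*A \<le> \<alpha>*A" by (rule mult_right_mono) (use assms in auto)
    ultimately show ?thesis by simp
  qed
  moreover have "sets (muB A) = sets borel" unfolding muB_def by simp
  ultimately show ?thesis unfolding admissible_input_def by blast
qed

lemma muB_lower: assumes A0: "0 < A" and sig: "\<sigma> > 0"
  shows "exp (A\<^sup>2/\<sigma>\<^sup>2)/4 - exp (3*(A\<^sup>2/\<sigma>\<^sup>2))/24 - 5/24 \<le> channel_MI (muB A) \<sigma>"
proof -
  interpret chan "muB A" \<sigma> A using admissible_chan[OF muB_adm[OF A0, of 1] sig] by simp
  define F where "F = exp (A\<^sup>2/\<sigma>\<^sup>2)/4 - exp (3*(A\<^sup>2/\<sigma>\<^sup>2))/24 - 5/24"
  define H where "H w = ln (nd \<sigma> (snd w)) - ln (pY (muB A) \<sigma> (fst w + snd w))" for w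
  have pYB: "pY (muB A) \<sigma> y = (nd \<sigma> (y - A) + nd \<sigma> y)/2" for y
    unfolding pY_def using muB_int[of "\<lambda>x. nd \<sigma> (y - x)" A] by simp
  have sl: "F \<le> (\<integral>z. nd \<sigma> z * H (x, z) \<partial>lborel)" if x: "x = 0 \<or> x = A" for x
  proof -
    define c where "c = (if x = 0 then A/\<sigma>\<^sup>2 else - A/\<sigma>\<^sup>2)"
    have c2: "c\<^sup>2*\<sigma>\<^sup>2 = A\<^sup>2/\<sigma>\<^sup>2" unfolding c_def using sig by (auto simp: power2_eq_square field_simps)
    have eqH: "H (x, z) = - ln ((1 + exp (c*z - c\<^sup>2*\<sigma>\<^sup>2/2))/2)" for z
    proof -
      have "pY (muB A) \<sigma> (x + z) = nd \<sigma> z * ((1 + exp (c*z - c\<^sup>2*\<sigma>\<^sup>2/2))/2)"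
      proof (cases "x = 0")
        case True
        have cc: "c = A/\<sigma>\<^sup>2" unfolding c_def using True by simp
        have "nd \<sigma> (z + (- A)) = nd \<sigma> z * exp (c*z - c\<^sup>2*\<sigma>\<^sup>2/2)"
          by (rule nd_ratio2[OF sig]) (simp add: cc)
        then have r: "nd \<sigma> (z - A) = nd \<sigma> z * exp (c*z - c\<^sup>2*\<sigma>\<^sup>2/2)" by simp
        have "pY (muB A) \<sigma> (x + z) = (nd \<sigma> z * exp (c*z - c\<^sup>2*\<sigma>\<^sup>2/2) + nd \<sigma> z)/2"
          unfolding pYB using True r by simp
        then show ?thesis by (simp add: algebra_simps add_divide_distrib)
      next
        case False
        then have xA: "x = A" using x by simp
        have cc: "c = - A/\<sigma>\<^sup>2" unfolding c_def using False by simp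
        have r: "nd \<sigma> (z + A) = nd \<sigma> z * exp (c*z - c\<^sup>2*\<sigma>\<^sup>2/2)"
          by (rule nd_ratio2[OF sig]) (simp add: cc)
        have "pY (muB A) \<sigma> (x + z) = (nd \<sigma> z + nd \<sigma> z * exp (c*z - c\<^sup>2*\<sigma>\<^sup>2/2))/2"
          unfolding pYB using xA r by (simp add: add.commute)
        then show ?thesis by (simp add: algebra_simps add_divide_distrib)
      qed
      then have "ln (pY (muB A) \<sigma> (x + z)) = ln (nd \<sigma> z) + ln ((1 + exp (c*z - c\<^sup>2*\<sigma>\<^sup>2/2))/2)"
        using nd_pos[OF sig, of z] by (simp only:) (rule ln_mult_pos, auto intro: add_pos_pos)
      then show ?thesis unfolding H_def by simp
    qed
    show ?thesis unfolding eqH using bin_slice[OF sig, of c] c2 F_def by simp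
  qed
  have "channel_MI (muB A) \<sigma> = (\<integral>w. H w \<partial>M)" unfolding MI_formula H_def ..
  also have "\<dots> = (\<integral>x. \<integral>z. H (x, z) \<partial>G \<partial>muB A)"
    using PM.integral_fst'[OF integrable_H] unfolding H_def by simp
  also have "\<dots> = ((\<integral>z. H (A, z) \<partial>G) + (\<integral>z. H (0, z) \<partial>G))/2"
  proof (rule muB_int)
    show "(\<lambda>x. \<integral>z. H (x, z) \<partial>G) \<in> borel_measurable borel"
      by (rule PM.M2.borel_measurable_lebesgue_integral) (simp add: H_def)
  qed
  finally have fin: "channel_MI (muB A) \<sigma> = ((\<integral>z. H (A, z) \<partial>G) + (\<integral>z. H (0, z) \<partial>G))/2" .
  have hG: "(\<integral>z. H (x, z) \<partial>G) = (\<integral>z. nd \<sigma> z * H (x, z) \<partial>lborel)" for x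
    unfolding gauss_noise_def H_def by (subst integral_density) auto
  show ?thesis using sl[of A] sl[of 0] fin hG[of A] hG[of 0] unfolding F_def by simp
qed

definition muU :: "real \<Rightarrow> real measure" where
  "muU A = density lborel (\<lambda>x. ennreal (indicator {0..A} x / A))"

lemma muU_adm: assumes "0 < A" "1/2 \<le> \<alpha>" shows "admissible_input A \<alpha> (muU A)"
proof -
  have m: "(\<lambda>x. indicator {0..A} x / A) \<in> borel_measurable borel" by simp
  have ii: "integrable lborel (\<lambda>x. indicator {0..A} x / A :: real)"
    by (intro integrable_divide) (auto simp: integrable_indicator_iff emeasure_lborel_Icc_eq)
  have "emeasure (muU A) (space (muU A)) = (\<integral>\<^sup>+x. ennreal (indicator {0..A} x / A) \<partial>lborel)"
    unfolding muU_def by (subst emeasure_density) auto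
  also have "\<dots> = ennreal (\<integral>x. indicator {0..A} x / A \<partial>lborel)"
    using ii assms by (intro nn_integral_eq_integral) auto
  also have "(\<integral>x. indicator {0..A} x / A \<partial>lborel) = 1" using assms by simp
  finally have "prob_space (muU A)" by (intro prob_spaceI) simp
  moreover have "AE x in muU A. 0 \<le> x" unfolding muU_def
    by (subst AE_density) (auto simp: indicator_def split: if_splits)
  moreover have "emeasure (muU A) {x. x > A} = 0" unfolding muU_def
    by (subst emeasure_density) (auto simp: indicator_def nn_integral_0_iff_AE split: if_splits)
  moreover have mn: "(\<integral>x. x \<partial>muU A) = A/2"
  proof -
    have "(\<integral>x. x \<partial>muU A) = (\<integral>x. (indicator {0..A} x / A) * x \<partial>lborel)"
      unfolding muU_def using assms by (subst integral_density) auto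
    also have "\<dots> = (\<integral>x. x^1 * indicator {0..A} x \<partial>lborel) / A" by (simp add: mult.commute)
    also have "\<dots> = A/2" using assms by (subst integral_power) (auto simp: power2_eq_square)
    finally show ?thesis .
  qed
  moreover have "(\<integral>x. x \<partial>muU A) \<le> \<alpha> * A"
  proof -
    have "(1/2)*A \<le> \<alpha>*A" by (rule mult_right_mono) (use assms in auto)
    then show ?thesis using mn by simp
  qed
  moreover have "sets (muU A) = sets borel" unfolding muU_def by simp
  ultimately show ?thesis unfolding admissible_input_def by blast
qed

lemma muU_lower: assumes A0: "0 < A" and sig: "\<sigma> > 0"
  shows "ln A - ln (2*pi*\<sigma>\<^sup>2)/2 - 1/2 \<le> channel_MI (muU A) \<sigma>"
proof -
  interpret chan "muU A" \<sigma> A using admissible_chan[OF muU_adm[OF A0, of 1] sig] by simp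
  have pu: "pY (muU A) \<sigma> y \<le> 1/A" for y
  proof -
    have "pY (muU A) \<sigma> y = (\<integral>x. (indicator {0..A} x / A) * nd \<sigma> (y - x) \<partial>lborel)"
      unfolding pY_def muU_def using A0 by (subst integral_density) auto
    also have "\<dots> \<le> (\<integral>x. nd \<sigma> (y - x) / A \<partial>lborel)"
    proof (rule integral_mono)
      have i: "integrable lborel (\<lambda>x. nd \<sigma> (y - x))" unfolding nd_sym using sig by simp
      have i2: "integrable lborel (\<lambda>x. nd \<sigma> (y - x) / A)" using i by simp
      then show "integrable lborel (\<lambda>x. nd \<sigma> (y - x) / A)" .
      show "integrable lborel (\<lambda>x. (indicator {0..A} x / A) * nd \<sigma> (y - x))"
        by (rule Bochner_Integration.integrable_bound[OF i2]) (auto simp: indicator_def A0 less_imp_le)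
      fix x show "indicator {0..A} x / A * nd \<sigma> (y - x) \<le> nd \<sigma> (y - x) / A"
        using A0 by (auto simp: indicator_def)
    qed
    also have "\<dots> = 1/A" unfolding nd_sym using sig by simp
    finally show ?thesis .
  qed
  have "(\<integral>w. ln (pY (muU A) \<sigma> (fst w + snd w)) \<partial>M) \<le> (\<integral>w. ln (1/A) \<partial>M)"
  proof (rule integral_mono)
    show "integrable M (\<lambda>w. ln (pY (muU A) \<sigma> (fst w + snd w)))" by (rule integrable_lnpY)
    show "integrable M (\<lambda>w. ln (1/A))" by simp
    fix w
    show "ln (pY (muU A) \<sigma> (fst w + snd w)) \<le> ln (1/A)"
      using pY_pos[of "fst w + snd w"] pu[of "fst w + snd w"] A0 by (subst ln_le_cancel_iff) auto
  qed
  then have "(\<integral>w. ln (pY (muU A) \<sigma> (fst w + snd w)) \<partial>M) \<le> - ln A"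
    using A0 by (simp add: PM.prob_space ln_div)
  then show ?thesis unfolding MI_split Lc_def by simp
qed

definition CS where "CS \<sigma> \<alpha> A = {channel_MI \<mu> \<sigma> | \<mu>. admissible_input A \<alpha> \<mu>}"

lemma CS_bound: assumes "\<sigma> > 0" "0 < A" "x \<in> CS \<sigma> \<alpha> A"
  shows "x \<le> ln (1 + A\<^sup>2/(4*\<sigma>\<^sup>2)) / 2"
proof -
  obtain \<mu> where adm: "admissible_input A \<alpha> \<mu>" and x: "x = channel_MI \<mu> \<sigma>"
    using assms(3) unfolding CS_def by auto
  interpret chan \<mu> \<sigma> A by (rule admissible_chan[OF adm assms(1)])
  show ?thesis unfolding x using assms(2) by (intro upper_gauss) simp
qed

lemma CS_bdd: assumes "\<sigma> > 0" "0 < A" shows "bdd_above (CS \<sigma> \<alpha> A)"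
  using CS_bound[OF assms] by (intro bdd_aboveI) blast

lemma cap_ge: assumes "\<sigma> > 0" "0 < A" "admissible_input A \<alpha> \<mu>"
  shows "channel_MI \<mu> \<sigma> \<le> capacity \<sigma> \<alpha> A"
  unfolding capacity_def using CS_bdd[OF assms(1,2), of \<alpha>] assms(3)
  by (intro cSup_upper) (auto simp: CS_def)

lemma cap_le_gauss: assumes "\<sigma> > 0" "0 < A" "1/2 \<le> \<alpha>"
  shows "capacity \<sigma> \<alpha> A \<le> ln (1 + A\<^sup>2/(4*\<sigma>\<^sup>2)) / 2"
  unfolding capacity_def
proof (rule cSup_least)
  show "{channel_MI \<mu> \<sigma> |\<mu>. admissible_input A \<alpha> \<mu>} \<noteq> {}"
    using muB_adm[OF assms(2,3)] by auto
  fix x assume "x \<in> {channel_MI \<mu> \<sigma> |\<mu>. admissible_input A \<alpha> \<mu>}"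
  then show "x \<le> ln (1 + A\<^sup>2/(4*\<sigma>\<^sup>2)) / 2" using CS_bound[OF assms(1,2)] unfolding CS_def by blast
qed

lemma cap_le_large: assumes "\<sigma> > 0" "2 \<le> A" "1/2 \<le> \<alpha>"
  shows "capacity \<sigma> \<alpha> A \<le> - ln (2*pi*\<sigma>\<^sup>2)/2 - 1/2 + ln ((A + 2 * sqrt A)/(1 - 1/A)) +
            ((- ln (1/A) + ln (2*pi*A\<^sup>2)/2 + 1/4) * \<sigma>\<^sup>2 + 3 * \<sigma>^4) / (sqrt A)^2"
  unfolding capacity_def
proof (rule cSup_least)
  have A0: "0 < A" using assms by simp
  show "{channel_MI \<mu> \<sigma> |\<mu>. admissible_input A \<alpha> \<mu>} \<noteq> {}"
    using muB_adm[OF A0 assms(3)] by auto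
  fix x assume "x \<in> {channel_MI \<mu> \<sigma> |\<mu>. admissible_input A \<alpha> \<mu>}"
  then obtain \<mu> where adm: "admissible_input A \<alpha> \<mu>" and x: "x = channel_MI \<mu> \<sigma>" by auto
  interpret chan \<mu> \<sigma> A by (rule admissible_chan[OF adm assms(1)])
  have "channel_MI \<mu> \<sigma> \<le> - Lc - 1/2 + ln ((A + 2 * sqrt A)/(1 - 1/A)) +
            ((- ln (1/A) + ln (2*pi*A\<^sup>2)/2 + 1/4) * \<sigma>\<^sup>2 + 3 * \<sigma>^4) / (sqrt A)^2"
    by (rule upper_large) (use assms in auto)
  then show "x \<le> - ln (2*pi*\<sigma>\<^sup>2)/2 - 1/2 + ln ((A + 2 * sqrt A)/(1 - 1/A)) +
            ((- ln (1/A) + ln (2*pi*A\<^sup>2)/2 + 1/4) * \<sigma>\<^sup>2 + 3 * \<sigma>^4) / (sqrt A)^2"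
    unfolding x Lc_def by simp
qed

theorem theorem4:
  fixes \<sigma> \<alpha> :: real
  assumes "\<sigma> > 0" and "1/2 \<le> \<alpha>" and "\<alpha> \<le> 1"
  shows "((\<lambda>A. capacity \<sigma> \<alpha> A - ln (A / \<sigma>)) \<longlongrightarrow> - (1/2) * ln (2 * pi * exp 1)) at_top \<and>
         ((\<lambda>A. capacity \<sigma> \<alpha> A / (A\<^sup>2 / \<sigma>\<^sup>2)) \<longlongrightarrow> 1/8) (at_right 0)"
proof
  have sig: "\<sigma> > 0" by fact
  define L where "L = - (1/2) * ln (2 * pi * exp 1)"
  have Leq: "L = - ln (2*pi)/2 - 1/2" unfolding L_def by (simp add: ln_mult) (simp add: field_simps)
  show "((\<lambda>A. capacity \<sigma> \<alpha> A - ln (A / \<sigma>)) \<longlongrightarrow> - (1/2) * ln (2 * pi * exp 1)) at_top"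
    unfolding L_def[symmetric]
  proof (rule tendsto_sandwich[where f="\<lambda>_. L" and h="\<lambda>A. L + ((ln ((A + 2 * sqrt A)/(1 - 1/A)) - ln A) + \<sigma>\<^sup>2 * (2 * (ln A / A)) + (ln (2*pi)/2 + 1/4) * \<sigma>\<^sup>2 * (1/A) + 3*\<sigma>^4 * (1/A))"])
    show "eventually (\<lambda>A. L \<le> capacity \<sigma> \<alpha> A - ln (A / \<sigma>)) at_top"
      using eventually_gt_at_top[of 0]
    proof eventually_elim
      case (elim A)
      have "ln A - ln (2*pi*\<sigma>\<^sup>2)/2 - 1/2 \<le> capacity \<sigma> \<alpha> A"
        using muU_lower[OF elim sig] cap_ge[OF sig elim muU_adm[OF elim assms(2)]] by linarith
      moreover have "ln (A/\<sigma>) = ln A - ln \<sigma>" using elim sig by (simp add: ln_div)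
      moreover have "ln (2*pi*\<sigma>\<^sup>2) = ln (2*pi) + 2 * ln \<sigma>" using sig by (simp add: ln_mult ln_realpow)
      ultimately show ?case unfolding Leq by (simp add: field_simps)
    qed
    show "eventually (\<lambda>A. capacity \<sigma> \<alpha> A - ln (A / \<sigma>) \<le> L + ((ln ((A + 2 * sqrt A)/(1 - 1/A)) - ln A) + \<sigma>\<^sup>2 * (2 * (ln A / A)) + (ln (2*pi)/2 + 1/4) * \<sigma>\<^sup>2 * (1/A) + 3*\<sigma>^4 * (1/A))) at_top"
      using eventually_ge_at_top[of 2]
    proof eventually_elim
      case (elim A)
      have A0: "A > 0" using elim by simp
      have c: "capacity \<sigma> \<alpha> A \<le> - ln (2*pi*\<sigma>\<^sup>2)/2 - 1/2 + ln ((A + 2 * sqrt A)/(1 - 1/A)) +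
            ((- ln (1/A) + ln (2*pi*A\<^sup>2)/2 + 1/4) * \<sigma>\<^sup>2 + 3 * \<sigma>^4) / (sqrt A)^2"
        by (rule cap_le_large[OF sig elim assms(2)])
      have e1: "(sqrt A)^2 = A" using A0 by simp
      have e2: "- ln (1/A) + ln (2*pi*A\<^sup>2)/2 + 1/4 = 2 * ln A + (ln (2*pi)/2 + 1/4)"
        using A0 by (simp add: ln_div ln_mult ln_realpow)
      have e3: "((2 * ln A + (ln (2*pi)/2 + 1/4)) * \<sigma>\<^sup>2 + 3 * \<sigma>^4) / A = \<sigma>\<^sup>2 * (2 * (ln A / A)) + (ln (2*pi)/2 + 1/4) * \<sigma>\<^sup>2 * (1/A) + 3*\<sigma>^4 * (1/A)"
        using A0 by (simp add: field_simps)
      have "ln (A/\<sigma>) = ln A - ln \<sigma>" using A0 sig by (simp add: ln_div)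
      moreover have "ln (2*pi*\<sigma>\<^sup>2) = ln (2*pi) + 2 * ln \<sigma>" using sig by (simp add: ln_mult ln_realpow)
      ultimately show ?case using c[unfolded e1 e2 e3] unfolding Leq by linarith
    qed
    have t1: "((\<lambda>A::real. ln ((A + 2 * sqrt A)/(1 - 1/A)) - ln A) \<longlongrightarrow> 0) at_top" by real_asymp
    have t2: "((\<lambda>A::real. ln A / A) \<longlongrightarrow> 0) at_top" by real_asymp
    have t3: "((\<lambda>A::real. 1 / A) \<longlongrightarrow> 0) at_top" by real_asymp
    have "((\<lambda>A. L + ((ln ((A + 2 * sqrt A)/(1 - 1/A)) - ln A) + \<sigma>\<^sup>2 * (2 * (ln A / A)) + (ln (2*pi)/2 + 1/4) * \<sigma>\<^sup>2 * (1/A) + 3*\<sigma>^4 * (1/A))) \<longlongrightarrow>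
       L + (0 + \<sigma>\<^sup>2 * (2 * 0) + (ln (2*pi)/2 + 1/4) * \<sigma>\<^sup>2 * 0 + 3*\<sigma>^4 * 0)) at_top"
      by (intro tendsto_intros t1 t2 t3)
    then show "((\<lambda>A. L + ((ln ((A + 2 * sqrt A)/(1 - 1/A)) - ln A) + \<sigma>\<^sup>2 * (2 * (ln A / A)) + (ln (2*pi)/2 + 1/4) * \<sigma>\<^sup>2 * (1/A) + 3*\<sigma>^4 * (1/A))) \<longlongrightarrow> L) at_top"
      by simp
  qed simp
next
  have sig: "\<sigma> > 0" by fact
  define lo where "lo a = (exp a/4 - exp (3*a)/24 - 5/24)/a" for a :: real
  define hi where "hi a = (ln (1 + a/4)/2)/a" for a :: real
  have flim: "filterlim (\<lambda>A::real. A\<^sup>2/\<sigma>\<^sup>2) (at_right 0) (at_right 0)" using sig by real_asymp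
  have l1: "(lo \<longlongrightarrow> 1/8) (at_right 0)" unfolding lo_def by real_asymp
  have l2: "(hi \<longlongrightarrow> 1/8) (at_right 0)" unfolding hi_def by real_asymp
  show "((\<lambda>A. capacity \<sigma> \<alpha> A / (A\<^sup>2 / \<sigma>\<^sup>2)) \<longlongrightarrow> 1/8) (at_right 0)"
  proof (rule tendsto_sandwich[where f="\<lambda>A. lo (A\<^sup>2/\<sigma>\<^sup>2)" and h="\<lambda>A. hi (A\<^sup>2/\<sigma>\<^sup>2)"])
    show "eventually (\<lambda>A. lo (A\<^sup>2/\<sigma>\<^sup>2) \<le> capacity \<sigma> \<alpha> A / (A\<^sup>2 / \<sigma>\<^sup>2)) (at_right 0)"
      using eventually_at_right_less[of 0]
    proof eventually_elim
      case (elim A)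
      have a0: "A\<^sup>2/\<sigma>\<^sup>2 > 0" using elim sig by simp
      have "exp (A\<^sup>2/\<sigma>\<^sup>2)/4 - exp (3*(A\<^sup>2/\<sigma>\<^sup>2))/24 - 5/24 \<le> capacity \<sigma> \<alpha> A"
        using muB_lower[OF elim sig] cap_ge[OF sig elim muB_adm[OF elim assms(2)]] by linarith
      then show ?case unfolding lo_def using a0 by (intro divide_right_mono) auto
    qed
    show "eventually (\<lambda>A. capacity \<sigma> \<alpha> A / (A\<^sup>2 / \<sigma>\<^sup>2) \<le> hi (A\<^sup>2/\<sigma>\<^sup>2)) (at_right 0)"
      using eventually_at_right_less[of 0]
    proof eventually_elim
      case (elim A)
      have a0: "A\<^sup>2/\<sigma>\<^sup>2 > 0" using elim sig by simp
      have "capacity \<sigma> \<alpha> A \<le> ln (1 + (A\<^sup>2/\<sigma>\<^sup>2)/4)/2"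
        using cap_le_gauss[OF sig elim assms(2)] by (simp add: field_simps)
      then show ?case unfolding hi_def using a0 by (intro divide_right_mono) auto
    qed
    show "((\<lambda>A. lo (A\<^sup>2/\<sigma>\<^sup>2)) \<longlongrightarrow> 1/8) (at_right 0)"
      using filterlim_compose[OF l1 flim] .
    show "((\<lambda>A. hi (A\<^sup>2/\<sigma>\<^sup>2)) \<longlongrightarrow> 1/8) (at_right 0)"
      using filterlim_compose[OF l2 flim] .
  qed
qed

end
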